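(* Let $X=(X_1,\dots,X_d)$ be a random vector with values in $\{0,1\}^d$ such that $\mathbb{P}(X=x)>0$ for every $x\in\{0,1\}^d$, let $G:\{0,1\}^d\to\mathbb{R}$, and let $\Gamma=(\Gamma_{A,B})_{A,B\subseteq D}$ with $\Gamma_{A,B}:=\mathbb{E}[e_A(X_A)e_B(X_B)]$ (an invertible matrix). For $A\subseteq D$ define $e^\star_A(X):=\sum_{B\subseteq D}(\Gamma^{-1})_{A,B}\,e_B(X_B)$. Then for all $A,B\subseteq D$, $\langle e_B(X_B),e^\star_A(X)\rangle=\mathbf{1}_{\{A=B\}}$, and $$G(X)=\sum_{A\subseteq D}\langle G(X),e^\star_A(X)\rangle\, e_A(X_A)\quad\text{a.s.}$$
   Context: $D=\{1,\dots,d\}$; for $A\subseteq D$, $X_A:=(X_i)_{i\in A}$, $\mathbf{P}_A(x_A):=\mathbb{P}(X_A=x_A)$, and $e_A(X_A):=\dfrac{(-1)^{\sum_{j\in A}X_j}}{\mathbf{P}_A(X_A)}$ with $e_\emptyset(X_\emptyset)=1$. The inner product is $\langle U,V\rangle:=\mathbb{E}[UV]$ for real random variables $U,V$ that are functions of $X$. *)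

theory Defs
  imports "HOL-Probability.Probability"
begin

definition Dset :: "nat \<Rightarrow> nat set" where
  "Dset d = {1..d}"

text \<open>The cube {0,1}^d, realised as extensional functions nat => nat supported on D.\<close>
definition cube :: "nat \<Rightarrow> (nat \<Rightarrow> nat) set" where
  "cube d = {x. (\<forall>i\<in>Dset d. x i \<in> {0,1}) \<and> (\<forall>i. i \<notin> Dset d \<longrightarrow> x i = 0)}"

definition margP :: "'a measure \<Rightarrow> ('a \<Rightarrow> nat \<Rightarrow> nat) \<Rightarrow> nat set \<Rightarrow> (nat \<Rightarrow> nat) \<Rightarrow> real" where
  "margP M X A x = measure M {\<omega> \<in> space M. \<forall>j\<in>A. X \<omega> j = x j}"

text \<open>e_A(x_A) = (-1)^(sum_{j in A} x_j) / P_A(x_A); e_{empty} = 1 automatically.\<close>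
definition ebasis :: "'a measure \<Rightarrow> ('a \<Rightarrow> nat \<Rightarrow> nat) \<Rightarrow> nat set \<Rightarrow> (nat \<Rightarrow> nat) \<Rightarrow> real" where
  "ebasis M X A x = (-1) ^ (\<Sum>j\<in>A. x j) / margP M X A x"

definition inner_rv :: "'a measure \<Rightarrow> ('a \<Rightarrow> real) \<Rightarrow> ('a \<Rightarrow> real) \<Rightarrow> real" where
  "inner_rv M U V = integral\<^sup>L M (\<lambda>\<omega>. U \<omega> * V \<omega>)"

definition Gamma :: "'a measure \<Rightarrow> ('a \<Rightarrow> nat \<Rightarrow> nat) \<Rightarrow> nat set \<Rightarrow> nat set \<Rightarrow> real" where
  "Gamma M X A B = inner_rv M (\<lambda>\<omega>. ebasis M X A (X \<omega>)) (\<lambda>\<omega>. ebasis M X B (X \<omega>))"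

definition Gamma_inv :: "nat \<Rightarrow> 'a measure \<Rightarrow> ('a \<Rightarrow> nat \<Rightarrow> nat) \<Rightarrow> nat set \<Rightarrow> nat set \<Rightarrow> real" where
  "Gamma_inv d M X = (THE N.
     (\<forall>A B. \<not> (A \<subseteq> Dset d \<and> B \<subseteq> Dset d) \<longrightarrow> N A B = 0) \<and>
     (\<forall>A\<in>Pow (Dset d). \<forall>C\<in>Pow (Dset d).
        (\<Sum>B\<in>Pow (Dset d). Gamma M X A B * N B C) = (if A = C then 1 else 0) \<and>
        (\<Sum>B\<in>Pow (Dset d). N A B * Gamma M X B C) = (if A = C then 1 else 0)))"

definition edual :: "nat \<Rightarrow> 'a measure \<Rightarrow> ('a \<Rightarrow> nat \<Rightarrow> nat) \<Rightarrow> nat set \<Rightarrow> 'a \<Rightarrow> real" where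
  "edual d M X A \<omega> = (\<Sum>B\<in>Pow (Dset d). Gamma_inv d M X A B * ebasis M X B (X \<omega>))"

end

theory Submission
  imports Defs "HOL-Library.Function_Algebras"
begin

interpretation fvs: vector_space "\<lambda>(r::real) (f::(nat\<Rightarrow>nat)\<Rightarrow>real) x. r * f x"
  by unfold_locales (auto simp: fun_eq_iff algebra_simps)

lemma sum_fun_app: "(sum F I) x = (\<Sum>i\<in>I. F i x)"
  by (induction I rule: infinite_finite_induct) auto

locale cubeloc =
  fixes M :: "'a measure" and X :: "'a \<Rightarrow> nat \<Rightarrow> nat" and d :: nat
  assumes ps: "prob_space M"
    and Xm: "X \<in> measurable M (count_space (cube d))"
    and pos: "\<forall>x\<in>cube d. measure M {\<omega> \<in> space M. X \<omega> = x} > 0"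
begin

sublocale PS: prob_space M by (rule ps)

definition p where "p x = measure M {\<omega> \<in> space M. X \<omega> = x}"

lemma X_in: "\<omega> \<in> space M \<Longrightarrow> X \<omega> \<in> cube d"
  using measurable_space[OF Xm] by simp

lemma finite_D: "finite (Dset d)" by (simp add: Dset_def)

lemma cube_sub: "cube d \<subseteq> (\<lambda>S j. if j \<in> S then 1 else 0) ` Pow (Dset d)"
proof
  fix x assume x: "x \<in> cube d"
  have "x = (\<lambda>j. if j \<in> {j\<in>Dset d. x j = 1} then 1 else 0)"
  proof
    fix j show "x j = (if j \<in> {j\<in>Dset d. x j = 1} then 1 else 0)"
      using x unfolding cube_def by (cases "j \<in> Dset d") auto
  qed
  then show "x \<in> (\<lambda>S j. if j \<in> S then 1 else 0) ` Pow (Dset d)" by blast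
qed

lemma finite_cube: "finite (cube d)"
  using finite_subset[OF cube_sub] finite_D by blast

lemma card_cube: "card (cube d) \<le> card (Pow (Dset d))"
proof (rule card_inj_on_le[of "\<lambda>x. {j\<in>Dset d. x j = 1}"])
  show "inj_on (\<lambda>x. {j \<in> Dset d. x j = 1}) (cube d)"
  proof (rule inj_onI)
    fix x y assume x: "x \<in> cube d" and y: "y \<in> cube d" and eq: "{j \<in> Dset d. x j = 1} = {j \<in> Dset d. y j = 1}"
    show "x = y"
    proof
      fix j show "x j = y j"
      proof (cases "j \<in> Dset d")
        case True
        then have "x j \<in> {0,1}" "y j \<in> {0,1}" using x y unfolding cube_def by auto
        moreover have "x j = 1 \<longleftrightarrow> y j = 1" using eq True by blast
        ultimately show ?thesis by auto
      next
        case False then show ?thesis using x y unfolding cube_def by auto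
      qed
    qed
  qed
qed (auto simp: finite_D)

lemma zero_cube: "(\<lambda>_. 0) \<in> cube d" by (simp add: cube_def)

lemma set_meas: "{\<omega> \<in> space M. X \<omega> \<in> S} \<in> sets M"
proof -
  have "X -` (S \<inter> cube d) \<inter> space M \<in> sets M"
    by (rule measurable_sets[OF Xm]) auto
  moreover have "X -` (S \<inter> cube d) \<inter> space M = {\<omega> \<in> space M. X \<omega> \<in> S}"
    using X_in by auto
  ultimately show ?thesis by simp
qed

lemma integral_X: "integral\<^sup>L M (\<lambda>\<omega>. f (X \<omega>)) = (\<Sum>x\<in>cube d. f x * p x)"
proof -
  have sm: "{\<omega> \<in> space M. X \<omega> = x} \<in> sets M" for x
    using set_meas[of "{x}"] by simp
  have "integral\<^sup>L M (\<lambda>\<omega>. f (X \<omega>)) =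
     integral\<^sup>L M (\<lambda>\<omega>. \<Sum>x\<in>cube d. f x * indicator {\<omega> \<in> space M. X \<omega> = x} \<omega>)"
  proof (rule Bochner_Integration.integral_cong[OF refl])
    fix \<omega> assume w: "\<omega> \<in> space M"
    have "(\<Sum>x\<in>cube d. f x * indicator {\<omega> \<in> space M. X \<omega> = x} \<omega>)
        = (\<Sum>x\<in>cube d. if X \<omega> = x then f x else 0)"
      using w by (intro sum.cong) (auto simp: indicator_def)
    also have "\<dots> = f (X \<omega>)" using X_in[OF w] finite_cube by simp
    finally show "f (X \<omega>) = (\<Sum>x\<in>cube d. f x * indicator {\<omega> \<in> space M. X \<omega> = x} \<omega>)" by simp
  qed
  also have "\<dots> = (\<Sum>x\<in>cube d. integral\<^sup>L M (\<lambda>\<omega>. f x * indicator {\<omega> \<in> space M. X \<omega> = x} \<omega>))"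
    by (rule Bochner_Integration.integral_sum[where I="cube d" and M=M and f="\<lambda>x \<omega>. f x * indicator {\<omega> \<in> space M. X \<omega> = x} \<omega>"])
       (auto intro!: integrable_mult_right integrable_real_indicator simp: sm PS.emeasure_finite less_top[symmetric])
  also have "\<dots> = (\<Sum>x\<in>cube d. f x * p x)"
    by (intro sum.cong refl) (simp add: p_def sm)
  finally show ?thesis .
qed

lemma margP_pos: assumes "x \<in> cube d" shows "margP M X A x > 0"
proof -
  have "p x \<le> margP M X A x"
    unfolding p_def margP_def
    using set_meas[of "{z. \<forall>j\<in>A. z j = x j}"]
    by (intro PS.finite_measure_mono) auto
  moreover have "p x > 0" using pos assms by (simp add: p_def)
  ultimately show ?thesis by simp
qed

abbreviation chi where "chi A x \<equiv> (-1::real) ^ (\<Sum>i\<in>A. x i)"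

lemma flip_zero:
  assumes j: "j \<in> A" "j \<notin> B" and AD: "A \<subseteq> Dset d"
  shows "(\<Sum>x\<in>cube d. chi A x * ebasis M X B x) = 0"
proof -
  define fl where "fl x = x(j := 1 - x j)" for x :: "nat \<Rightarrow> nat"
  have jD: "j \<in> Dset d" using j AD by auto
  have finA: "finite A" using AD finite_D finite_subset by blast
  have fl_in: "fl x \<in> cube d" if "x \<in> cube d" for x
    using that jD unfolding cube_def fl_def by auto
  have fl_fl: "fl (fl x) = x" if "x \<in> cube d" for x
  proof -
    have "x j \<in> {0,1}" using that jD unfolding cube_def by auto
    then show ?thesis unfolding fl_def by (auto simp: fun_eq_iff)
  qed
  have key: "chi A (fl x) * ebasis M X B (fl x) = - (chi A x * ebasis M X B x)"
    if x: "x \<in> cube d" for x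
  proof -
    have eB: "ebasis M X B (fl x) = ebasis M X B x"
    proof -
      have "(\<Sum>i\<in>B. fl x i) = (\<Sum>i\<in>B. x i)"
        by (rule sum.cong) (use j(2) in \<open>auto simp: fl_def\<close>)
      moreover have "{\<omega>\<in>space M. \<forall>i\<in>B. X \<omega> i = fl x i} = {\<omega>\<in>space M. \<forall>i\<in>B. X \<omega> i = x i}"
        using j(2) by (force simp: fl_def)
      ultimately show ?thesis unfolding ebasis_def margP_def by simp
    qed
    have s1: "(\<Sum>i\<in>A. fl x i) = (1 - x j) + (\<Sum>i\<in>A-{j}. x i)"
      using sum.remove[OF finA j(1), of "fl x"] unfolding fl_def
      by (simp add: sum.cong[of "A-{j}" "A-{j}" "x(j := 1 - x j)" x])
    have s2: "(\<Sum>i\<in>A. x i) = x j + (\<Sum>i\<in>A-{j}. x i)"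
      using sum.remove[OF finA j(1), of x] by simp
    have "x j \<in> {0,1}" using x jD unfolding cube_def by auto
    then have "chi A (fl x) = - chi A x"
      unfolding s1 s2 by (auto simp: power_add)
    then show ?thesis using eB by simp
  qed
  have "(\<Sum>x\<in>cube d. chi A x * ebasis M X B x) = (\<Sum>x\<in>cube d. - (chi A x * ebasis M X B x))"
    by (rule sum.reindex_bij_witness[of _ fl fl]) (auto simp: fl_in fl_fl key)
  then show ?thesis by (simp add: sum_negf)
qed


abbreviation e where "e \<equiv> ebasis M X"

lemma chi_e_self: "x \<in> cube d \<Longrightarrow> chi A x * e A x = 1 / margP M X A x"
proof -
  have "chi A x * chi A x = 1"
    by (simp add: power_add[symmetric])
  then show "x \<in> cube d \<Longrightarrow> chi A x * e A x = 1 / margP M X A x"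
    unfolding ebasis_def by (simp add: divide_simps)
qed

lemma indep:
  assumes h: "\<And>x. x \<in> cube d \<Longrightarrow> (\<Sum>A\<in>Pow (Dset d). c A * e A x) = 0"
    and A: "A \<in> Pow (Dset d)"
  shows "c A = 0"
proof (rule ccontr)
  assume cA: "c A \<noteq> 0"
  define S where "S = {A\<in>Pow (Dset d). c A \<noteq> 0}"
  have finS: "finite S" unfolding S_def using finite_D by simp
  have "A \<in> S" using A cA by (simp add: S_def)
  then have ne: "card ` S \<noteq> {}" by blast
  have "Max (card ` S) \<in> card ` S" using Max_in[OF _ ne] finS by simp
  then obtain A0 where A0: "A0 \<in> S" "card A0 = Max (card ` S)" by auto
  have A0max: "card B \<le> card A0" if "B \<in> S" for B
    using A0(2) finS that by simp
  have A0P: "A0 \<in> Pow (Dset d)" and cA0: "c A0 \<noteq> 0" using A0(1) by (auto simp: S_def)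
  have zero: "c B * (\<Sum>x\<in>cube d. chi A0 x * e B x) = 0" if B: "B \<in> Pow (Dset d)" "B \<noteq> A0" for B
  proof (cases "c B = 0")
    case False
    then have "B \<in> S" using B by (simp add: S_def)
    then have cle: "card B \<le> card A0" by (rule A0max)
    have "\<not> A0 \<subseteq> B"
    proof
      assume "A0 \<subseteq> B"
      then have "A0 \<subset> B" using B(2) by auto
      moreover have "finite B" using B finite_D finite_subset by auto
      ultimately have "card A0 < card B" by (rule psubset_card_mono[rotated])
      with cle show False by simp
    qed
    then obtain j where "j \<in> A0" "j \<notin> B" by auto
    then show ?thesis using flip_zero[of j A0 B] A0P by simp
  qed simp
  have "0 = (\<Sum>x\<in>cube d. chi A0 x * (\<Sum>B\<in>Pow (Dset d). c B * e B x))"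
    using h by simp
  also have "\<dots> = (\<Sum>B\<in>Pow (Dset d). c B * (\<Sum>x\<in>cube d. chi A0 x * e B x))"
    by (simp add: sum_distrib_left sum_distrib_right sum.swap[of _ "cube d"] mult.assoc mult.left_commute)
  also have "\<dots> = c A0 * (\<Sum>x\<in>cube d. chi A0 x * e A0 x)"
  proof -
    have "(\<Sum>B\<in>Pow (Dset d) - {A0}. c B * (\<Sum>x\<in>cube d. chi A0 x * e B x)) = 0"
      using zero by (intro sum.neutral) auto
    then show ?thesis using A0P finite_D by (subst sum.remove[of _ A0]) auto
  qed
  also have "\<dots> = c A0 * (\<Sum>x\<in>cube d. 1 / margP M X A0 x)"
    by (simp add: chi_e_self)
  finally have "c A0 * (\<Sum>x\<in>cube d. 1 / margP M X A0 x) = 0" by simp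
  moreover have "(\<Sum>x\<in>cube d. 1 / margP M X A0 x) > 0"
    using finite_cube zero_cube margP_pos by (intro sum_pos) auto
  ultimately show False using cA0 by simp
qed


lemma span_exists: "\<exists>c. \<forall>x\<in>cube d. f x = (\<Sum>A\<in>Pow (Dset d). c A * e A x)"
proof -
  let ?sc = "\<lambda>(r::real) (f::(nat\<Rightarrow>nat)\<Rightarrow>real) x. r * f x"
  define E where "E A = (\<lambda>x. if x \<in> cube d then e A x else 0)" for A
  define \<delta> where "\<delta> y = (\<lambda>x::nat\<Rightarrow>nat. if x = y then (1::real) else 0)" for y
  define V where "V = fvs.span (\<delta> ` cube d)"
  define P where "P = Pow (Dset d)"
  have finP: "finite P" using finite_D by (simp add: P_def)
  have injE: "inj_on E P"
  proof (rule inj_onI, rule ccontr)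
    fix A B assume A: "A \<in> P" and B: "B \<in> P" and eq: "E A = E B" and ne: "A \<noteq> B"
    define c where "c C = (if C = A then 1 else 0) - (if C = B then (1::real) else 0)" for C
    have "c A = 0"
    proof (rule indep[OF _ A[unfolded P_def]])
      fix x assume x: "x \<in> cube d"
      have "(\<Sum>C\<in>Pow (Dset d). c C * e C x)
          = (\<Sum>C\<in>Pow (Dset d). (if C = A then e C x else 0)) - (\<Sum>C\<in>Pow (Dset d). (if C = B then e C x else 0))"
        unfolding c_def sum_subtractf[symmetric] by (intro sum.cong) auto
      also have "\<dots> = e A x - e B x" using A B finite_D by (simp add: P_def)
      also have "\<dots> = 0" using fun_cong[OF eq, of x] x by (simp add: E_def)
      finally show "(\<Sum>C\<in>Pow (Dset d). c C * e C x) = 0" .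
    qed
    then show False using ne by (simp add: c_def)
  qed
  have indE: "\<not> fvs.dependent (E ` P)"
  proof
    assume "fvs.dependent (E ` P)"
    then obtain u where u: "\<exists>v\<in>E ` P. u v \<noteq> 0" "(\<Sum>v\<in>E ` P. ?sc (u v) v) = 0"
      using fvs.dependent_finite[of "E ` P"] finP by auto
    have z0: "(\<Sum>A\<in>P. ?sc (u (E A)) (E A)) = 0" using u(2) by (simp add: sum.reindex[OF injE])
    have z: "(\<Sum>A\<in>P. u (E A) * e A x) = 0" if "x \<in> cube d" for x
    proof -
      have "(\<Sum>A\<in>P. ?sc (u (E A)) (E A)) x = 0" using z0 by simp
      then show ?thesis using that unfolding sum_fun_app by (simp add: E_def)
    qed
    have "u (E A) = 0" if "A \<in> P" for A
      using indep[of "\<lambda>A. u (E A)" A] z that by (simp add: P_def)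
    then show False using u(1) by auto
  qed
  have inV: "(\<lambda>x. if x \<in> cube d then g x else 0) \<in> V" for g
  proof -
    have "(\<lambda>x. if x \<in> cube d then g x else 0) = (\<Sum>y\<in>cube d. ?sc (g y) (\<delta> y))"
    proof
      fix x show "(if x \<in> cube d then g x else 0) = (\<Sum>y\<in>cube d. ?sc (g y) (\<delta> y)) x"
        unfolding sum_fun_app \<delta>_def by (simp add: finite_cube if_distrib[of "\<lambda>t. _ * t"] cong: if_cong)
    qed
    also have "\<dots> \<in> V" unfolding V_def
      by (intro fvs.span_sum fvs.span_scale fvs.span_base) auto
    finally show ?thesis .
  qed
  have EV: "E ` P \<subseteq> V" using inV unfolding E_def by auto
  have "fvs.span (E ` P) \<supseteq> V"
  proof
    fix a assume aV: "a \<in> V"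
    show "a \<in> fvs.span (E ` P)"
    proof (rule ccontr)
      assume "a \<notin> fvs.span (E ` P)"
      then have ind: "fvs.independent (insert a (E ` P))"
        using fvs.independent_insertI indE by blast
      have "insert a (E ` P) \<subseteq> fvs.span (\<delta> ` cube d)"
        using aV EV unfolding V_def by auto
      then have "card (insert a (E ` P)) \<le> card (\<delta> ` cube d)"
        using fvs.independent_span_bound[OF _ ind] finite_cube by auto
      also have "\<dots> \<le> card (cube d)" by (rule card_image_le[OF finite_cube])
      also have "\<dots> \<le> card P" using card_cube by (simp add: P_def)
      also have "\<dots> = card (E ` P)" using card_image[OF injE] by simp
      finally show False
        using \<open>a \<notin> fvs.span (E ` P)\<close> fvs.span_base[of a "E ` P"] finP by (auto simp: card_insert_if split: if_splits)
    qed
  qed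
  then have "V \<subseteq> fvs.span (E ` P)" by simp
  with inV[of f] have "(\<lambda>x. if x \<in> cube d then f x else 0) \<in> fvs.span (E ` P)" by blast
  then obtain u where u: "(\<lambda>x. if x \<in> cube d then f x else 0) = (\<Sum>v\<in>E ` P. ?sc (u v) v)"
    using fvs.span_finite[of "E ` P"] finP by auto
  also have "\<dots> = (\<Sum>A\<in>P. ?sc (u (E A)) (E A))" by (simp add: sum.reindex[OF injE])
  finally have fe: "(\<lambda>x. if x \<in> cube d then f x else 0) = (\<Sum>A\<in>P. ?sc (u (E A)) (E A))" .
  have "\<forall>x\<in>cube d. f x = (\<Sum>A\<in>Pow (Dset d). u (E A) * e A x)"
  proof
    fix x assume x: "x \<in> cube d"
    show "f x = (\<Sum>A\<in>Pow (Dset d). u (E A) * e A x)"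
      using fun_cong[OF fe, of x] x by (simp add: sum_fun_app E_def P_def)
  qed
  then show ?thesis by (rule exI[of _ "\<lambda>A. u (E A)"])
qed


end

context cubeloc
begin
abbreviation PD where "PD \<equiv> Pow (Dset d)"

lemma finPD: "finite PD" using finite_D by simp

definition coef where "coef f = (SOME c. \<forall>x\<in>cube d. f x = (\<Sum>A\<in>PD. c A * e A x))"

lemma coef_rep: "x \<in> cube d \<Longrightarrow> f x = (\<Sum>A\<in>PD. coef f A * e A x)"
  using someI_ex[OF span_exists[of f]] unfolding coef_def by blast

lemma uniq:
  assumes "\<And>x. x \<in> cube d \<Longrightarrow> (\<Sum>A\<in>PD. c A * e A x) = (\<Sum>A\<in>PD. c' A * e A x)" "A \<in> PD"
  shows "c A = c' A"
  using indep[of "\<lambda>A. c A - c' A" A] assms by (simp add: left_diff_distrib sum_subtractf)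

definition ip where "ip f g = (\<Sum>x\<in>cube d. f x * g x * p x)"

lemma inner_X: "inner_rv M (\<lambda>\<omega>. f (X \<omega>)) (\<lambda>\<omega>. g (X \<omega>)) = ip f g"
  unfolding inner_rv_def ip_def using integral_X[of "\<lambda>x. f x * g x"] by simp

lemma ip_comm: "ip f g = ip g f" unfolding ip_def by (simp add: ac_simps)

lemma Gamma_ip: "Gamma M X A B = ip (e A) (e B)" unfolding Gamma_def by (rule inner_X)

lemma px: "x \<in> cube d \<Longrightarrow> p x > 0" using pos by (simp add: p_def)

definition psi where "psi A x = coef (\<lambda>z. if z = x then 1 else 0) A / p x"

lemma dual:
  assumes A: "A \<in> PD" and B: "B \<in> PD"
  shows "ip (e B) (psi A) = (if A = B then 1 else 0)"
proof -
  define c' where "c' A' = (\<Sum>x\<in>cube d. e B x * coef (\<lambda>z. if z = x then 1 else 0) A')" for A'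
  have "ip (e B) (psi A) = c' A"
    unfolding ip_def psi_def c'_def
  proof (intro sum.cong refl)
    fix x assume x: "x \<in> cube d"
    have "p x \<noteq> 0" using px[OF x] by simp
    then show "e B x * (coef (\<lambda>z. if z = x then 1 else 0) A / p x) * p x =
      e B x * coef (\<lambda>z. if z = x then 1 else 0) A" by simp
  qed
  also have "c' A = (\<lambda>A'. if A' = B then 1 else 0) A"
  proof (rule uniq[OF _ A])
    fix z assume z: "z \<in> cube d"
    have "(\<Sum>A'\<in>PD. c' A' * e A' z) = (\<Sum>x\<in>cube d. e B x * (\<Sum>A'\<in>PD. coef (\<lambda>z. if z = x then 1 else 0) A' * e A' z))"
      unfolding c'_def by (simp add: sum_distrib_left sum_distrib_right sum.swap[of _ "cube d"] mult.assoc)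
    also have "\<dots> = (\<Sum>x\<in>cube d. e B x * (if z = x then 1 else 0))"
      by (intro sum.cong refl) (simp add: coef_rep[OF z, symmetric])
    also have "\<dots> = e B z" using z finite_cube by (simp add: if_distrib[of "\<lambda>t. _ * t"] cong: if_cong)
    also have "\<dots> = (\<Sum>A'\<in>PD. (if A' = B then 1 else 0) * e A' z)"
      using B finPD by (simp add: if_distrib[of "\<lambda>t. t * _"] cong: if_cong)
    finally show "(\<Sum>A'\<in>PD. c' A' * e A' z) = (\<Sum>A'\<in>PD. (if A' = B then 1 else 0) * e A' z)" .
  qed
  finally show ?thesis by simp
qed

definition N where "N A B = (if A \<in> PD \<and> B \<in> PD then coef (psi A) B else 0)"

lemma N_left:
  assumes A: "A \<in> PD" and C: "C \<in> PD"
  shows "(\<Sum>B\<in>PD. N A B * Gamma M X B C) = (if A = C then 1 else 0)"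
proof -
  have "(\<Sum>B\<in>PD. N A B * Gamma M X B C) = (\<Sum>B\<in>PD. coef (psi A) B * (\<Sum>x\<in>cube d. e B x * e C x * p x))"
    using A by (intro sum.cong refl) (auto simp: N_def Gamma_ip ip_def)
  also have "\<dots> = (\<Sum>x\<in>cube d. (\<Sum>B\<in>PD. coef (psi A) B * e B x) * e C x * p x)"
    by (simp add: sum_distrib_left sum_distrib_right sum.swap[of _ "cube d"] mult.assoc)
  also have "\<dots> = (\<Sum>x\<in>cube d. psi A x * e C x * p x)"
    by (intro sum.cong refl) (simp add: coef_rep[symmetric])
  also have "\<dots> = ip (e C) (psi A)" unfolding ip_def by (simp add: ac_simps)
  also have "\<dots> = (if A = C then 1 else 0)" by (rule dual[OF A C])
  finally show ?thesis .
qed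

lemma Gamma_sym: "Gamma M X A B = Gamma M X B A"
  unfolding Gamma_ip by (rule ip_comm)

lemma delta_sum: "C \<in> PD \<Longrightarrow> (\<Sum>B\<in>PD. f B * (if B = C then 1 else 0)) = (f C :: real)"
  using finPD by (simp add: if_distrib[of "\<lambda>t. _ * t"] cong: if_cong)

lemma delta_sum': "C \<in> PD \<Longrightarrow> (\<Sum>B\<in>PD. (if C = B then 1 else 0) * f B) = (f C :: real)"
  using finPD by (simp add: if_distrib[of "\<lambda>t. t * _"] cong: if_cong)

lemma N_rightT:
  assumes A: "A \<in> PD" and C: "C \<in> PD"
  shows "(\<Sum>B\<in>PD. Gamma M X A B * N C B) = (if A = C then 1 else 0)"
proof -
  have "(\<Sum>B\<in>PD. Gamma M X A B * N C B) = (\<Sum>B\<in>PD. N C B * Gamma M X B A)"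
    by (simp add: Gamma_sym mult.commute)
  also have "\<dots> = (if C = A then 1 else 0)" by (rule N_left[OF C A])
  finally show ?thesis by auto
qed

lemma N_sym: "N A C = N C A"
proof (cases "A \<in> PD \<and> C \<in> PD")
  case True
  then have A: "A \<in> PD" and C: "C \<in> PD" by auto
  have "N A C = (\<Sum>B\<in>PD. N A B * (if B = C then 1 else 0))" using delta_sum[OF C] by simp
  also have "\<dots> = (\<Sum>B\<in>PD. N A B * (\<Sum>E\<in>PD. Gamma M X B E * N C E))"
    using C by (intro sum.cong refl) (simp add: N_rightT)
  also have "\<dots> = (\<Sum>B\<in>PD. \<Sum>E\<in>PD. N A B * (Gamma M X B E * N C E))"
    by (simp add: sum_distrib_left mult.assoc)
  also have "\<dots> = (\<Sum>E\<in>PD. \<Sum>B\<in>PD. N A B * (Gamma M X B E * N C E))"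
    by (rule sum.swap)
  also have "\<dots> = (\<Sum>E\<in>PD. (\<Sum>B\<in>PD. N A B * Gamma M X B E) * N C E)"
    by (simp add: sum_distrib_right mult.assoc)
  also have "\<dots> = (\<Sum>E\<in>PD. (if A = E then 1 else 0) * N C E)"
    using A by (intro sum.cong refl) (simp add: N_left)
  also have "\<dots> = N C A" by (rule delta_sum'[OF A])
  finally show ?thesis .
qed (auto simp: N_def)

lemma N_right:
  assumes A: "A \<in> PD" and C: "C \<in> PD"
  shows "(\<Sum>B\<in>PD. Gamma M X A B * N B C) = (if A = C then 1 else 0)"
  using N_rightT[OF A C] by (simp add: N_sym)

lemma Ginv: "Gamma_inv d M X = N"
  unfolding Gamma_inv_def
proof (rule the_equality)
  show "(\<forall>A B. \<not> (A \<subseteq> Dset d \<and> B \<subseteq> Dset d) \<longrightarrow> N A B = 0) \<and>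
    (\<forall>A\<in>PD. \<forall>C\<in>PD. (\<Sum>B\<in>PD. Gamma M X A B * N B C) = (if A = C then 1 else 0) \<and>
        (\<Sum>B\<in>PD. N A B * Gamma M X B C) = (if A = C then 1 else 0))"
    using N_left N_right by (auto simp: N_def)
next
  fix N' assume h: "(\<forall>A B. \<not> (A \<subseteq> Dset d \<and> B \<subseteq> Dset d) \<longrightarrow> N' A B = 0) \<and>
    (\<forall>A\<in>PD. \<forall>C\<in>PD. (\<Sum>B\<in>PD. Gamma M X A B * N' B C) = (if A = C then 1 else 0) \<and>
        (\<Sum>B\<in>PD. N' A B * Gamma M X B C) = (if A = C then 1 else 0))"
  show "N' = N"
  proof (intro ext)
    fix A C
    show "N' A C = N A C"
    proof (cases "A \<in> PD \<and> C \<in> PD")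
      case True
      then have A: "A \<in> PD" and C: "C \<in> PD" by auto
      have "N' A C = (\<Sum>B\<in>PD. N' A B * (if B = C then 1 else 0))" using delta_sum[OF C] by simp
      also have "\<dots> = (\<Sum>B\<in>PD. N' A B * (\<Sum>E\<in>PD. Gamma M X B E * N E C))"
        using C by (intro sum.cong refl) (simp add: N_right)
      also have "\<dots> = (\<Sum>B\<in>PD. \<Sum>E\<in>PD. N' A B * (Gamma M X B E * N E C))"
        by (simp add: sum_distrib_left mult.assoc)
  also have "\<dots> = (\<Sum>E\<in>PD. \<Sum>B\<in>PD. N' A B * (Gamma M X B E * N E C))"
    by (rule sum.swap)
  also have "\<dots> = (\<Sum>E\<in>PD. (\<Sum>B\<in>PD. N' A B * Gamma M X B E) * N E C)"
    by (simp add: sum_distrib_right mult.assoc)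
      also have "\<dots> = (\<Sum>E\<in>PD. (if A = E then 1 else 0) * N E C)"
        using A h by (intro sum.cong refl) simp
      also have "\<dots> = N A C" by (rule delta_sum'[OF A])
      finally show ?thesis .
    next
      case False
      then show ?thesis using h by (auto simp: N_def)
    qed
  qed
qed

definition ed where "ed A y = (\<Sum>B\<in>PD. N A B * e B y)"

lemma edual_eq: "edual d M X A = (\<lambda>\<omega>. ed A (X \<omega>))"
  by (simp add: edual_def ed_def Ginv fun_eq_iff)

lemma ip_ed: "ip f (ed A) = (\<Sum>C\<in>PD. N A C * ip f (e C))"
  unfolding ip_def ed_def
  by (simp add: sum_distrib_left sum_distrib_right sum.swap[of _ "cube d"] ac_simps)

lemma part_a:
  assumes A: "A \<in> PD" and B: "B \<in> PD"
  shows "ip (e B) (ed A) = (if A = B then 1 else 0)"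
proof -
  have "ip (e B) (ed A) = (\<Sum>C\<in>PD. N A C * Gamma M X C B)"
    unfolding ip_ed by (simp add: Gamma_ip ip_comm)
  also have "\<dots> = (if A = B then 1 else 0)" by (rule N_left[OF A B])
  finally show ?thesis .
qed

lemma ip_lin: "ip f g = (\<Sum>B\<in>PD. coef f B * ip (e B) g)"
proof -
  have "ip f g = (\<Sum>x\<in>cube d. (\<Sum>B\<in>PD. coef f B * e B x) * g x * p x)"
    unfolding ip_def by (intro sum.cong refl) (simp add: coef_rep[symmetric])
  also have "\<dots> = (\<Sum>B\<in>PD. coef f B * ip (e B) g)"
    unfolding ip_def by (simp add: sum_distrib_left sum_distrib_right sum.swap[of _ "cube d"] ac_simps)
  finally show ?thesis .
qed

lemma coef_ip: "A \<in> PD \<Longrightarrow> ip f (ed A) = coef f A"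
  unfolding ip_lin[of f] using part_a finPD by (simp add: if_distrib[of "\<lambda>t. _ * t"] cong: if_cong)

end

theorem corollary3:
  fixes M :: "'a measure" and X :: "'a \<Rightarrow> nat \<Rightarrow> nat" and d :: nat
    and G :: "(nat \<Rightarrow> nat) \<Rightarrow> real"
  assumes "prob_space M"
    and "X \<in> measurable M (count_space (cube d))"
    and "\<forall>x\<in>cube d. measure M {\<omega> \<in> space M. X \<omega> = x} > 0"
  shows "(\<forall>A\<subseteq>Dset d. \<forall>B\<subseteq>Dset d.
            inner_rv M (\<lambda>\<omega>. ebasis M X B (X \<omega>)) (edual d M X A) = (if A = B then 1 else 0))
       \<and> (AE \<omega> in M. G (X \<omega>) =
            (\<Sum>A\<in>Pow (Dset d). inner_rv M (\<lambda>\<omega>'. G (X \<omega>')) (edual d M X A) * ebasis M X A (X \<omega>)))"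
proof -
  interpret cubeloc M X d by (rule cubeloc.intro[OF assms])
  have a: "inner_rv M (\<lambda>\<omega>. ebasis M X B (X \<omega>)) (edual d M X A) = (if A = B then 1 else 0)"
    if "A \<subseteq> Dset d" "B \<subseteq> Dset d" for A B
    using that part_a[of A B] by (simp add: edual_eq inner_X)
  have b: "G (X \<omega>) =
       (\<Sum>A\<in>Pow (Dset d). inner_rv M (\<lambda>\<omega>'. G (X \<omega>')) (edual d M X A) * ebasis M X A (X \<omega>))"
    if w: "\<omega> \<in> space M" for \<omega>
  proof -
    have "G (X \<omega>) = (\<Sum>A\<in>PD. coef G A * e A (X \<omega>))" by (rule coef_rep[OF X_in[OF w]])
    also have "\<dots> = (\<Sum>A\<in>Pow (Dset d). inner_rv M (\<lambda>\<omega>'. G (X \<omega>')) (edual d M X A) * ebasis M X A (X \<omega>))"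
      by (intro sum.cong refl) (simp add: edual_eq inner_X coef_ip)
    finally show ?thesis .
  qed
  show ?thesis
  proof (intro conjI)
    show "\<forall>A\<subseteq>Dset d. \<forall>B\<subseteq>Dset d.
            inner_rv M (\<lambda>\<omega>. ebasis M X B (X \<omega>)) (edual d M X A) = (if A = B then 1 else 0)"
      using a by blast
    show "AE \<omega> in M. G (X \<omega>) =
            (\<Sum>A\<in>Pow (Dset d). inner_rv M (\<lambda>\<omega>'. G (X \<omega>')) (edual d M X A) * ebasis M X A (X \<omega>))"
      by (rule AE_I2) (rule b)
  qed
qed

end
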